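(* Let $\mu_1$ and $\mu_2$ be Borel probability measures on $\mathbb{R}_+=[0,+\infty)$, neither of which is a point mass, and let $\mu=\mu_1\boxtimes\mu_2$. Set $k_j(z)=\eta_{\mu_j}(z)/z$, $j=1,2$. Then $|\varphi_t'(\omega_2(t))|<1$ for every $t<0$; equivalently, \[|t^2k_1'(\omega_1(t))k_2'(\omega_2(t))|<1,\quad t\in(-\infty,0).\]
   Context: For a Borel probability measure $\nu\neq\delta_0$ on $\mathbb{R}_+$, $\psi_\nu(z)=\int_{\mathbb{R}_+}\frac{zs\,d\nu(s)}{1-zs}$ and $\eta_\nu(z)=\psi_\nu(z)/(1+\psi_\nu(z))$ for $z\in\mathbb{C}\setminus\mathbb{R}_+$; ${\rm Eta}_{\mathbb{R}_+}$ is the set of all such $\eta_\nu$ (each maps $(-\infty,0)$ into $(-\infty,0)$). The free multiplicative convolution $\mu_1\boxtimes\mu_2$ is the distribution of $x_2^{1/2}x_1x_2^{1/2}$ for freely independent positive operators $x_1,x_2$ affiliated with a tracial $W^*$-probability space, with distributions $\mu_1,\mu_2$. The subordination functions $\omega_1,\omega_2$ are the unique functions in ${\rm Eta}_{\mathbb{R}_+}$ such that $\eta_\mu(z)=\eta_{\mu_1}(\omega_1(z))=\eta_{\mu_2}(\omega_2(z))=\omega_1(z)\omega_2(z)/z$ for $z$ in the upper half-plane $\mathbb{H}$. For $t<0$, $\varphi_t$ denotes the map $\varphi_t(z)=tk_1(tk_2(z))$ on $\mathbb{C}\setminus\mathbb{R}_+$, which fixes $\omega_2(t)$. *)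

theory Defs
  imports "HOL-Probability.Probability"
begin

definition prob_on_Rplus :: "real measure \<Rightarrow> bool" where
  "prob_on_Rplus \<nu> \<longleftrightarrow> prob_space \<nu> \<and> sets \<nu> = sets borel \<and> emeasure \<nu> {..<0} = 0"

definition is_point_mass :: "real measure \<Rightarrow> bool" where
  "is_point_mass \<nu> \<longleftrightarrow> (\<exists>a. \<nu> = return borel a)"

definition Cminus_Rplus :: "complex set" where
  "Cminus_Rplus = - (complex_of_real ` {0..})"

definition psi :: "real measure \<Rightarrow> complex \<Rightarrow> complex" where
  "psi \<nu> z = (\<integral> s. z * complex_of_real s / (1 - z * complex_of_real s) \<partial>\<nu>)"

definition eta :: "real measure \<Rightarrow> complex \<Rightarrow> complex" where
  "eta \<nu> z = psi \<nu> z / (1 + psi \<nu> z)"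

definition Eta_Rplus :: "(complex \<Rightarrow> complex) set" where
  "Eta_Rplus = {f. \<exists>\<nu>. prob_on_Rplus \<nu> \<and> \<nu> \<noteq> return borel 0 \<and>
                      (\<forall>z\<in>Cminus_Rplus. f z = eta \<nu> z)}"

text \<open>Subordination functions of mu1 boxtimes mu2: the (unique) pair in Eta_{R_+} with
  eta_{mu1}(omega1 z) = eta_{mu2}(omega2 z) = omega1 z * omega2 z / z on the upper half-plane.\<close>
definition subordination_pair ::
  "real measure \<Rightarrow> real measure \<Rightarrow> (complex \<Rightarrow> complex) \<Rightarrow> (complex \<Rightarrow> complex) \<Rightarrow> bool" where
  "subordination_pair \<mu>1 \<mu>2 \<omega>1 \<omega>2 \<longleftrightarrow>
     \<omega>1 \<in> Eta_Rplus \<and> \<omega>2 \<in> Eta_Rplus \<and>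
     (\<forall>z. Im z > 0 \<longrightarrow>
        eta \<mu>1 (\<omega>1 z) = \<omega>1 z * \<omega>2 z / z \<and>
        eta \<mu>2 (\<omega>2 z) = \<omega>1 z * \<omega>2 z / z)"

end

theory Submission
  imports Defs
begin

lemma basic:
  assumes "prob_on_Rplus \<nu>"
  shows "prob_space \<nu>" "sets \<nu> = sets borel" "space \<nu> = UNIV" "AE s in \<nu>. 0 \<le> s"
proof -
  show P: "prob_space \<nu>" "sets \<nu> = sets borel" using assms by (auto simp: prob_on_Rplus_def)
  then show S: "space \<nu> = UNIV" by (metis sets_eq_imp_space_eq space_borel)
  show "AE s in \<nu>. 0 \<le> s"
    by (rule AE_I[of _ _ "{..<0}"]) (use assms P in \<open>auto simp: prob_on_Rplus_def\<close>)
qed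

lemma meas_cong:
  assumes "prob_on_Rplus \<nu>" "f \<in> borel_measurable borel"
  shows "f \<in> borel_measurable \<nu>"
  using assms basic(2)[OF assms(1)] measurable_cong_sets by blast

lemma int_pos:
  fixes g :: "real \<Rightarrow> real"
  assumes "prob_space \<nu>" "integrable \<nu> g" "AE s in \<nu>. 0 < g s"
  shows "0 < integral\<^sup>L \<nu> g"
proof -
  have ae: "AE s in \<nu>. 0 \<le> g s" using assms(3) by eventually_elim simp
  have "0 \<le> integral\<^sup>L \<nu> g" using ae by (rule integral_nonneg_AE)
  moreover have "integral\<^sup>L \<nu> g \<noteq> 0"
  proof
    assume "integral\<^sup>L \<nu> g = 0"
    with ae have "AE s in \<nu>. g s = 0" using assms(2) integral_nonneg_eq_0_iff_AE[of \<nu> g] by blast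
    with assms(3) have "AE s in \<nu>. False" by eventually_elim auto
    then show False using assms(1) prob_space.AE_False by blast
  qed
  ultimately show ?thesis by linarith
qed

lemma not_delta:
  assumes "prob_on_Rplus \<nu>" "AE s in \<nu>. s = 0"
  shows "\<nu> = return borel 0"
proof (rule measure_eqI)
  note b = basic[OF assms(1)]
  show "sets \<nu> = sets (return borel 0)" using b(2) by simp
  fix A assume A: "A \<in> sets \<nu>"
  have A0: "A \<inter> {0} \<in> sets \<nu>" using A unfolding b(2) by (intro sets.Int) auto
  have sp: "space \<nu> \<in> sets \<nu>" by simp
  have ae1: "AE s in \<nu>. (s \<in> A) = (s \<in> A \<inter> {0})" using assms(2) by eventually_elim simp
  have "emeasure \<nu> A = emeasure \<nu> (A \<inter> {0})"
    by (rule emeasure_eq_AE[OF ae1 A A0])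
  also have "\<dots> = indicator A 0"
  proof (cases "0 \<in> A")
    case True
    have ae2: "AE s in \<nu>. (s \<in> A \<inter> {0}) = (s \<in> space \<nu>)" using assms(2)
      by eventually_elim (use True b(3) in simp)
    have "emeasure \<nu> (A \<inter> {0}) = emeasure \<nu> (space \<nu>)"
      by (rule emeasure_eq_AE[OF ae2 A0 sp])
    then show ?thesis using True prob_space.emeasure_space_1[OF b(1)] by simp
  next
    case False then show ?thesis by simp
  qed
  finally show "emeasure \<nu> A = emeasure (return borel 0) A" using A b(2) by simp
qed

lemma int_pos2:
  fixes g :: "real \<Rightarrow> real"
  assumes "prob_on_Rplus \<nu>" "\<nu> \<noteq> return borel 0" "integrable \<nu> g"
    "\<And>s. 0 \<le> s \<Longrightarrow> 0 \<le> g s" "\<And>s. 0 < s \<Longrightarrow> 0 < g s"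
  shows "0 < integral\<^sup>L \<nu> g"
proof -
  note b = basic[OF assms(1)]
  have ae: "AE s in \<nu>. 0 \<le> g s" using b(4) by eventually_elim (rule assms(4))
  have "0 \<le> integral\<^sup>L \<nu> g" using ae by (rule integral_nonneg_AE)
  moreover have "integral\<^sup>L \<nu> g \<noteq> 0"
  proof
    assume "integral\<^sup>L \<nu> g = 0"
    then have "AE s in \<nu>. g s = 0" using integral_nonneg_eq_0_iff_AE[OF assms(3) ae] by simp
    with b(4) have "AE s in \<nu>. s = 0"
    proof eventually_elim
      case (elim s)
      show "s = 0"
      proof (rule ccontr)
        assume "s \<noteq> 0"
        then have "0 < s" using elim by simp
        then have "0 < g s" by (rule assms(5))
        then show False using elim by simp
      qed
    qed
    then have "\<nu> = return borel 0" by (rule not_delta[OF assms(1)])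
    then show False using assms(2) by contradiction
  qed
  ultimately show ?thesis by linarith
qed


lemma norm_ge1:
  assumes "Re y \<le> 0" "0 \<le> s"
  shows "1 \<le> norm (1 - y * complex_of_real s)"
proof -
  have "Re (1 - y * complex_of_real s) = 1 - Re y * s" by simp
  also have "\<dots> \<ge> 1" using assms by (simp add: mult_nonpos_nonneg)
  finally show ?thesis using complex_Re_le_cmod order_trans by blast
qed

lemma cor_meas: "(\<lambda>s::real. complex_of_real s) \<in> borel_measurable borel"
  by (intro borel_measurable_continuous_onI continuous_intros) 
lemma g_meas: "(\<lambda>s. y * complex_of_real s / (1 - y * complex_of_real s)) \<in> borel_measurable borel"
  by (intro borel_measurable_divide borel_measurable_times borel_measurable_diff borel_measurable_const cor_meas) 
lemma q_meas: "(\<lambda>s. complex_of_real s / (1 - y * complex_of_real s)^2) \<in> borel_measurable borel"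
  by (intro borel_measurable_divide borel_measurable_times borel_measurable_power borel_measurable_diff borel_measurable_const cor_meas) 

lemma g_bound:
  assumes "Re y \<le> 0" "0 \<le> s"
  shows "norm (y * complex_of_real s / (1 - y * complex_of_real s)) \<le> 2"
proof -
  have n: "1 \<le> norm (1 - y * complex_of_real s)" using norm_ge1[OF assms] .
  then have nz: "1 - y * complex_of_real s \<noteq> 0" by auto
  have "y * complex_of_real s / (1 - y * complex_of_real s) = -1 + 1 / (1 - y * complex_of_real s)"
    using nz by (simp add: field_simps)
  also have "norm \<dots> \<le> norm (-1::complex) + norm (1 / (1 - y * complex_of_real s))" by (rule norm_triangle_ineq)
  also have "norm (1 / (1 - y * complex_of_real s)) \<le> 1" using n by (simp add: norm_divide divide_le_eq_1)
  finally show ?thesis by simp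
qed

lemma g_int:
  assumes "prob_on_Rplus \<nu>" "Re y \<le> 0"
  shows "integrable \<nu> (\<lambda>s. y * complex_of_real s / (1 - y * complex_of_real s))"
proof -
  note b = basic[OF assms(1)]
  interpret prob_space \<nu> by (rule b(1))
  show ?thesis
  proof (rule integrable_const_bound[where B=2])
    show "AE s in \<nu>. norm (y * complex_of_real s / (1 - y * complex_of_real s)) \<le> 2"
      using b(4) by eventually_elim (rule g_bound[OF assms(2)])
    show "(\<lambda>s. y * complex_of_real s / (1 - y * complex_of_real s)) \<in> borel_measurable \<nu>"
      using meas_cong[OF assms(1) g_meas] .
  qed
qed

lemma q_bound:
  assumes "x < 0" "0 \<le> s"
  shows "norm (complex_of_real s / (1 - complex_of_real x * complex_of_real s)^2) \<le> - 1 / x"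
proof -
  have e: "complex_of_real s / (1 - complex_of_real x * complex_of_real s)^2 = complex_of_real (s / (1 - x * s)^2)" by simp
  have p: "1 \<le> 1 - x * s" using assms by (simp add: mult_nonpos_nonneg)
  have "s / (1 - x * s)^2 \<le> s / (1 - x * s)"
    using p assms by (intro divide_left_mono) (auto simp: power2_eq_square)
  also have "\<dots> \<le> - 1 / x"
  proof -
    have "s * (- x) \<le> 1 - x * s" by simp
    then show ?thesis using assms p by (simp add: divide_le_eq le_divide_eq algebra_simps)
  qed
  finally have "s / (1 - x * s)^2 \<le> - 1 / x" .
  moreover have "0 \<le> s / (1 - x * s)^2" using assms by simp
  moreover have "norm (complex_of_real s / (1 - complex_of_real x * complex_of_real s)^2) = \<bar>s / (1 - x * s)^2\<bar>"
    unfolding e by (rule norm_of_real)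
  ultimately show ?thesis by linarith
qed

lemma q_int:
  assumes "prob_on_Rplus \<nu>" "x < 0"
  shows "integrable \<nu> (\<lambda>s. complex_of_real s / (1 - complex_of_real x * complex_of_real s)^2)"
proof -
  note b = basic[OF assms(1)]
  interpret prob_space \<nu> by (rule b(1))
  show ?thesis
  proof (rule integrable_const_bound[where B="- 1 / x"])
    show "AE s in \<nu>. norm (complex_of_real s / (1 - complex_of_real x * complex_of_real s)^2) \<le> - 1 / x"
      using b(4) by eventually_elim (rule q_bound[OF assms(2)])
    show "(\<lambda>s. complex_of_real s / (1 - complex_of_real x * complex_of_real s)^2) \<in> borel_measurable \<nu>"
      using meas_cong[OF assms(1) q_meas] .
  qed
qed


lemma pt_identity:
  fixes y X a :: complex
  assumes "1 - y * a \<noteq> 0" "1 - X * a \<noteq> 0" "y \<noteq> X"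
  shows "(y * a / (1 - y * a) - X * a / (1 - X * a)) / (y - X) - a / (1 - X * a)^2
         = a^2 * (y - X) / ((1 - y * a) * (1 - X * a)^2)"
proof -
  have yx: "y - X \<noteq> 0" using assms by simp
  have 1: "y * a / (1 - y * a) - X * a / (1 - X * a) = (a * (y - X)) / ((1 - y * a) * (1 - X * a))"
    using assms by (simp add: diff_frac_eq) (simp add: algebra_simps)
  have 2: "(a * (y - X)) / ((1 - y * a) * (1 - X * a)) / (y - X) = a / ((1 - y * a) * (1 - X * a))"
    using yx by simp
  have 3: "a / ((1 - y * a) * (1 - X * a)) - a / (1 - X * a)^2 = a^2 * (y - X) / ((1 - y * a) * (1 - X * a)^2)"
    using assms by (simp add: diff_frac_eq power2_eq_square divide_simps) (simp add: algebra_simps)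
  show ?thesis unfolding 1 2 3 ..
qed

lemma pt_bound:
  assumes "x < 0" "0 \<le> s" "Re y \<le> 0" "y \<noteq> complex_of_real x"
  shows "norm ((y * complex_of_real s / (1 - y * complex_of_real s)
           - complex_of_real x * complex_of_real s / (1 - complex_of_real x * complex_of_real s))
           / (y - complex_of_real x)
         - complex_of_real s / (1 - complex_of_real x * complex_of_real s)^2)
       \<le> norm (y - complex_of_real x) / (x * x)"
proof -
  define a where "a = complex_of_real s"
  define X where "X = complex_of_real x"
  have n1: "1 \<le> norm (1 - y * a)" unfolding a_def using norm_ge1 assms by blast
  have p: "1 \<le> 1 - x * s" using assms by (simp add: mult_nonpos_nonneg)
  have d0: "1 - X * a = complex_of_real (1 - x * s)" unfolding X_def a_def by simp
  have "1 - x * s \<noteq> 0" using p by linarith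
  then have nz0: "1 - X * a \<noteq> 0" unfolding d0 of_real_eq_0_iff .
  have nz1: "1 - y * a \<noteq> 0" using n1 by auto
  have nd0: "norm (1 - X * a) = 1 - x * s" unfolding d0 norm_of_real using p by simp
  have na: "norm a = s" unfolding a_def using assms by simp
  have eq: "(y * a / (1 - y * a) - X * a / (1 - X * a)) / (y - X) - a / (1 - X * a)^2
         = a^2 * (y - X) / ((1 - y * a) * (1 - X * a)^2)"
    by (rule pt_identity) (use nz0 nz1 assms(4) X_def in auto)
  have "norm (a^2 * (y - X) / ((1 - y * a) * (1 - X * a)^2))
        = (s^2 / (1 - x * s)^2) * norm (y - X) / norm (1 - y * a)"
    by (simp add: norm_mult norm_divide norm_power nd0 na)
  also have "\<dots> \<le> (s^2 / (1 - x * s)^2) * norm (y - X)"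
  proof -
    have "(s^2 / (1 - x * s)^2) * norm (y - X) / norm (1 - y * a) \<le> (s^2 / (1 - x * s)^2) * norm (y - X) / 1"
      using n1 by (intro divide_left_mono) auto
    then show ?thesis by simp
  qed
  also have "\<dots> \<le> (1 / (x * x)) * norm (y - X)"
  proof (rule mult_right_mono)
    have xs: "x * s \<le> 0" using assms by (simp add: mult_nonpos_nonneg)
    have "(- (x * s))^2 \<le> (1 - x * s)^2"
      using xs by (intro power_mono) auto
    then have "(x * s)^2 \<le> (1 - x * s)^2" by simp
    then have "x * x * s^2 \<le> (1 - x * s)^2" by (simp add: power2_eq_square algebra_simps)
    then show "s^2 / (1 - x * s)^2 \<le> 1 / (x * x)" using assms p
      by (simp add: divide_le_eq le_divide_eq mult.commute)
  qed simp
  also have "\<dots> = norm (y - X) / (x * x)" by simp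
  finally have F: "norm (a^2 * (y - X) / ((1 - y * a) * (1 - X * a)^2)) \<le> norm (y - X) / (x * x)" .
  show ?thesis unfolding a_def[symmetric] X_def[symmetric] eq using F .
qed

lemma psi_deriv:
  assumes "prob_on_Rplus \<nu>" "x < 0"
  shows "(psi \<nu> has_field_derivative
           (\<integral>s. complex_of_real s / (1 - complex_of_real x * complex_of_real s)^2 \<partial>\<nu>))
         (at (complex_of_real x))"
proof -
  note b = basic[OF assms(1)]
  interpret prob_space \<nu> by (rule b(1))
  define X where "X = complex_of_real x"
  define g where "g y s = y * complex_of_real s / (1 - y * complex_of_real s)" for y s
  define q where "q s = complex_of_real s / (1 - X * complex_of_real s)^2" for s
  define Q where "Q = integral\<^sup>L \<nu> q"
  have psi_eq: "psi \<nu> y = integral\<^sup>L \<nu> (g y)" for y unfolding psi_def g_def by simp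
  have key: "norm ((psi \<nu> y - psi \<nu> X)/(y - X) - Q) \<le> norm (y - X) / (x * x)"
    if y: "Re y \<le> 0" "y \<noteq> X" for y
  proof -
    have i1: "integrable \<nu> (g y)" using g_int[OF assms(1) y(1)] unfolding g_def .
    have i2: "integrable \<nu> (g X)" using g_int[OF assms(1), of X] assms(2) unfolding g_def X_def by simp
    have iq: "integrable \<nu> q" using q_int[OF assms] unfolding q_def X_def .
    have id: "integrable \<nu> (\<lambda>s. (g y s - g X s)/(y - X) - q s)"
      using i1 i2 iq by (intro Bochner_Integration.integrable_diff integrable_divide_zero) auto
    have "(psi \<nu> y - psi \<nu> X)/(y - X) - Q = integral\<^sup>L \<nu> (\<lambda>s. (g y s - g X s)/(y - X) - q s)"
      using i1 i2 iq unfolding psi_eq Q_def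
      by (subst Bochner_Integration.integral_diff) (auto intro: integrable_divide_zero Bochner_Integration.integrable_diff)
    also have "norm \<dots> \<le> integral\<^sup>L \<nu> (\<lambda>s. norm ((g y s - g X s)/(y - X) - q s))"
      by (rule integral_norm_bound)
    also have "\<dots> \<le> integral\<^sup>L \<nu> (\<lambda>s. norm (y - X) / (x * x))"
    proof (rule integral_mono_AE)
      show "integrable \<nu> (\<lambda>s. norm ((g y s - g X s)/(y - X) - q s))"
        using id by (rule integrable_norm)
      show "integrable \<nu> (\<lambda>s. norm (y - X) / (x * x))" by simp
      show "AE s in \<nu>. norm ((g y s - g X s)/(y - X) - q s) \<le> norm (y - X) / (x * x)"
        using b(4) by eventually_elim (unfold g_def q_def X_def, rule pt_bound[OF assms(2) _ y[unfolded X_def]])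
    qed
    also have "\<dots> = norm (y - X) / (x * x)" by (simp add: prob_space)
    finally show ?thesis .
  qed
  have ev: "eventually (\<lambda>y. norm ((psi \<nu> y - psi \<nu> X)/(y - X) - Q) \<le> norm (y - X) / (x * x)) (at X)"
    unfolding eventually_at
  proof (intro exI[of _ "- x"] conjI ballI impI)
    show "0 < - x" using assms by simp
    fix y assume "y \<in> UNIV" and y: "y \<noteq> X \<and> dist y X < - x"
    have "\<bar>Re y - x\<bar> \<le> dist y X" unfolding X_def dist_norm
      using abs_Re_le_cmod[of "y - complex_of_real x"] by simp
    then have "Re y \<le> 0" using y by linarith
    moreover have "y \<noteq> X" using y by auto
    ultimately show "norm ((psi \<nu> y - psi \<nu> X)/(y - X) - Q) \<le> norm (y - X) / (x * x)" by (rule key)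
  qed
  have lim0: "((\<lambda>y. norm (y - X) / (x * x)) \<longlongrightarrow> 0) (at X)"
    by (intro tendsto_divide_zero tendsto_norm_zero LIM_zero tendsto_ident_at)
  have "((\<lambda>y. (psi \<nu> y - psi \<nu> X)/(y - X) - Q) \<longlongrightarrow> 0) (at X)"
    by (rule Lim_null_comparison[OF ev lim0])
  then have "((\<lambda>y. (psi \<nu> y - psi \<nu> X)/(y - X)) \<longlongrightarrow> Q) (at X)"
    by (simp add: Lim_null[symmetric])
  then show ?thesis unfolding has_field_derivative_iff Q_def q_def X_def .
qed


lemma id_meas: "(\<lambda>s::real. s) \<in> borel_measurable borel"
  by (rule measurable_ident_sets) simp

lemma a_meas: "(\<lambda>s::real. - x * s / (1 - x * s)) \<in> borel_measurable borel"
  by (intro borel_measurable_divide borel_measurable_times borel_measurable_diff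
      borel_measurable_const borel_measurable_uminus id_meas)

lemma a_props:
  fixes x s :: real
  assumes "x < 0" "0 \<le> s"
  shows "0 \<le> - x * s / (1 - x * s)" "- x * s / (1 - x * s) < 1"
    "0 < s \<Longrightarrow> 0 < - x * s / (1 - x * s)"
proof -
  have xs0: "x * s \<le> 0" using mult_nonpos_nonneg[of x s] assms by simp
  then have p: "1 \<le> 1 - x * s" by linarith
  have xs: "0 \<le> - x * s" using xs0 by simp
  show "0 \<le> - x * s / (1 - x * s)" using p xs by (intro divide_nonneg_nonneg) auto
  have "- x * s < 1 * (1 - x * s)" by simp
  then show "- x * s / (1 - x * s) < 1" using p by (subst pos_divide_less_eq) auto
  show "0 < s \<Longrightarrow> 0 < - x * s / (1 - x * s)" using p assms
    by (intro divide_pos_pos) (auto simp: mult_neg_pos)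
qed

lemma key_real:
  assumes nu: "prob_on_Rplus \<nu>" "\<nu> \<noteq> return borel 0" and x: "x < 0"
    and a_def: "a = (\<lambda>s. - x * s / (1 - x * s))"
  shows "integrable \<nu> a" "integrable \<nu> (\<lambda>s. (a s)^2)"
    "0 < integral\<^sup>L \<nu> a" "integral\<^sup>L \<nu> a < 1"
    "integral\<^sup>L \<nu> a - integral\<^sup>L \<nu> (\<lambda>s. (a s)^2) > 0"
    "integral\<^sup>L \<nu> (\<lambda>s. (a s)^2) \<ge> (integral\<^sup>L \<nu> a)^2"
proof -
  note b = basic[OF nu(1)]
  interpret prob_space \<nu> by (rule b(1))
  have am: "a \<in> borel_measurable \<nu>" unfolding a_def by (rule meas_cong[OF nu(1) a_meas])
  have abd: "AE s in \<nu>. norm (a s) \<le> 1" using b(4)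
  proof eventually_elim
    case (elim s)
    have "0 \<le> a s" "a s < 1" using a_props[OF x elim] unfolding a_def by auto
    then show ?case by simp
  qed
  show ia: "integrable \<nu> a" by (rule integrable_const_bound[OF abd am])
  have a2m: "(\<lambda>s. (a s)^2) \<in> borel_measurable \<nu>" using am by (rule borel_measurable_power)
  have a2bd: "AE s in \<nu>. norm ((a s)^2) \<le> 1" using abd
  proof eventually_elim
    case (elim s)
    then have "\<bar>a s\<bar> \<le> 1" by simp
    then have "\<bar>a s\<bar>^2 \<le> 1" by (intro power_le_one) auto
    then show ?case by simp
  qed
  show ia2: "integrable \<nu> (\<lambda>s. (a s)^2)" by (rule integrable_const_bound[OF a2bd a2m])
  show "0 < integral\<^sup>L \<nu> a"
    by (rule int_pos2[OF nu ia]) (use a_props[OF x] in \<open>auto simp: a_def\<close>)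
  have "0 < integral\<^sup>L \<nu> (\<lambda>s. 1 - a s)"
  proof (rule int_pos[OF b(1)])
    show "integrable \<nu> (\<lambda>s. 1 - a s)" using ia by simp
    show "AE s in \<nu>. 0 < 1 - a s" using b(4)
    proof eventually_elim
      case (elim s)
      have "a s < 1" using a_props[OF x elim] unfolding a_def by auto
      then show ?case by simp
    qed
  qed
  then show "integral\<^sup>L \<nu> a < 1" using ia by (simp add: prob_space)
  have "0 < integral\<^sup>L \<nu> (\<lambda>s. a s - (a s)^2)"
  proof (rule int_pos2[OF nu])
    show "integrable \<nu> (\<lambda>s. a s - (a s)^2)" using ia ia2 by simp
    fix s :: real
    assume s: "0 \<le> s"
    have "0 \<le> a s" "a s < 1" using a_props[OF x s] unfolding a_def by auto
    then have "a s * a s \<le> a s" by (intro mult_left_le) auto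
    then show "0 \<le> a s - (a s)^2" by (simp add: power2_eq_square)
  next
    fix s :: real
    assume s: "0 < s"
    have "0 < a s" "a s < 1" using a_props[OF x] s unfolding a_def by auto
    then show "0 < a s - (a s)^2" by (simp add: power2_eq_square mult_less_cancel_left1)
  qed
  then show "integral\<^sup>L \<nu> a - integral\<^sup>L \<nu> (\<lambda>s. (a s)^2) > 0" using ia ia2 by simp
  define A where "A = integral\<^sup>L \<nu> a"
  have "0 \<le> integral\<^sup>L \<nu> (\<lambda>s. (a s - A)^2)" by simp
  also have "integral\<^sup>L \<nu> (\<lambda>s. (a s - A)^2) = integral\<^sup>L \<nu> (\<lambda>s. (a s)^2 - 2 * A * a s + A^2)"
    by (simp add: power2_diff algebra_simps)
  also have "\<dots> = integral\<^sup>L \<nu> (\<lambda>s. (a s)^2) - 2 * A * A + A^2"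
    using ia ia2 by (simp add: A_def prob_space)
  finally show "integral\<^sup>L \<nu> (\<lambda>s. (a s)^2) \<ge> (integral\<^sup>L \<nu> a)^2"
    unfolding A_def by (simp add: power2_eq_square)
qed


lemma q_real_identity:
  fixes x s :: real
  assumes "x \<noteq> 0"
  shows "s / (1 - x * s)^2 = ((- x * s / (1 - x * s))^2 - (- x * s / (1 - x * s))) / x"
proof (cases "1 - x * s = 0")
  case True then show ?thesis by simp
next
  case False
  define d where "d = 1 - x * s"
  have d: "d \<noteq> 0" using False d_def by simp
  have xs: "x * s = 1 - d" unfolding d_def by simp
  have "(- x * s / d)^2 - (- x * s / d) = (x * s) * (x * s + d) / d^2"
    using d by (simp add: power2_eq_square field_simps)
  also have "\<dots> = x * s / d^2" unfolding xs by simp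
  finally have "((- x * s / d)^2 - (- x * s / d)) / x = s / d^2" using assms by simp
  then show ?thesis unfolding d_def by simp
qed

lemma rval_lemma:
  fixes A B x q p e D :: real
  assumes h: "A \<noteq> 0" "1 - A \<noteq> 0" "x \<noteq> 0"
    and defs: "q = (B - A) / x" "p = - A" "e = - A / (1 - A)" "D = (A - B) / (A * (1 - A))"
  shows "(((q * (1 + p) - p * (0 + q)) / ((1 + p) * (1 + p))) * x - e * 1) / (x * x) = (e / x) * (D - 1) / x"
proof -
  have 1: "q * (1 + p) - p * (0 + q) = q" by (simp add: algebra_simps)
  have 2: "(q / ((1 + p) * (1 + p))) * x = (B - A) / ((1 - A) * (1 - A))"
    using h unfolding defs by simp
  have d: "(1 - A) * (1 - A) \<noteq> 0" using h by simp
  have ed: "e * ((1 - A) * (1 - A)) = - A * (1 - A)" using h unfolding defs by simp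
  have 3: "(B - A) / ((1 - A) * (1 - A)) - e * 1 = (B - A^2) / ((1 - A) * (1 - A))"
  proof -
    have "(B - A) / ((1 - A) * (1 - A)) - e * 1 = ((B - A) - e * ((1 - A) * (1 - A))) / ((1 - A) * (1 - A))"
      using d by (simp add: diff_divide_distrib)
    also have "(B - A) - e * ((1 - A) * (1 - A)) = B - A^2" unfolding ed by (simp add: algebra_simps power2_eq_square)
    finally show ?thesis .
  qed
  have 4: "e * (D - 1) = (B - A^2) / ((1 - A) * (1 - A))"
  proof -
    have dA: "A * (1 - A) \<noteq> 0" using h by simp
    have "D - 1 = ((A - B) - A * (1 - A)) / (A * (1 - A))"
      unfolding defs using dA by (simp add: diff_divide_distrib)
    also have "(A - B) - A * (1 - A) = A^2 - B" by (simp add: algebra_simps power2_eq_square)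
    finally have Dm: "D - 1 = (A^2 - B) / (A * (1 - A))" .
    have "e * (D - 1) = (- A / (1 - A)) * ((A^2 - B) / (A * (1 - A)))" unfolding Dm defs(3) ..
    also have "\<dots> = (- A * (A^2 - B)) / ((1 - A) * (A * (1 - A)))" by (rule times_divide_times_eq)
    also have "\<dots> = (A * (B - A^2)) / (A * ((1 - A) * (1 - A)))"
      by (intro arg_cong2[where f="(/)"]) (simp_all add: algebra_simps)
    also have "\<dots> = (B - A^2) / ((1 - A) * (1 - A))" using h(1) by (rule mult_divide_mult_cancel_left)
    finally show ?thesis .
  qed
  have "(((q * (1 + p) - p * (0 + q)) / ((1 + p) * (1 + p))) * x - e * 1) / (x * x)
      = ((B - A^2) / ((1 - A) * (1 - A))) / (x * x)" unfolding 1 2 3 ..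
  also have "\<dots> = (e * (D - 1)) / (x * x)" unfolding 4 ..
  also have "\<dots> = (e / x) * (D - 1) / x" by simp
  finally show ?thesis .
qed

lemma key:
  assumes nu: "prob_on_Rplus \<nu>" "\<nu> \<noteq> return borel 0" and x: "x < 0"
  shows "\<exists>e D. eta \<nu> (complex_of_real x) = complex_of_real e \<and> e < 0 \<and>
      isCont (eta \<nu>) (complex_of_real x) \<and>
      ((\<lambda>z. eta \<nu> z / z) has_field_derivative complex_of_real ((e / x) * (D - 1) / x)) (at (complex_of_real x)) \<and>
      0 < D \<and> D \<le> 1"
proof -
  define a where "a = (\<lambda>s. - x * s / (1 - x * s))"
  define A where "A = integral\<^sup>L \<nu> a"
  define B where "B = integral\<^sup>L \<nu> (\<lambda>s. (a s)^2)"
  note kr = key_real[OF nu x a_def, folded A_def B_def]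
  have A0: "0 < A" "A < 1" and AB: "0 < A - B" "A^2 \<le> B" using kr by auto
  have psiX: "psi \<nu> (complex_of_real x) = complex_of_real (- A)"
  proof -
    have "psi \<nu> (complex_of_real x) = (\<integral>s. complex_of_real (- a s) \<partial>\<nu>)"
      unfolding psi_def a_def by (intro Bochner_Integration.integral_cong) auto
    also have "\<dots> = complex_of_real (- A)" unfolding A_def by simp
    finally show ?thesis .
  qed
  have QX: "(\<integral>s. complex_of_real s / (1 - complex_of_real x * complex_of_real s)^2 \<partial>\<nu>)
            = complex_of_real ((B - A) / x)"
  proof -
    have "(\<integral>s. complex_of_real s / (1 - complex_of_real x * complex_of_real s)^2 \<partial>\<nu>)
         = (\<integral>s. complex_of_real (((a s)^2 - a s) / x) \<partial>\<nu>)"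
    proof (intro Bochner_Integration.integral_cong refl)
      fix s
      have "complex_of_real s / (1 - complex_of_real x * complex_of_real s)^2 = complex_of_real (s / (1 - x * s)^2)"
        by simp
      also have "s / (1 - x * s)^2 = ((a s)^2 - a s) / x" unfolding a_def
        using x by (intro q_real_identity) auto
      finally show "complex_of_real s / (1 - complex_of_real x * complex_of_real s)^2 = complex_of_real (((a s)^2 - a s) / x)" .
    qed
    also have "\<dots> = complex_of_real (\<integral>s. ((a s)^2 - a s) / x \<partial>\<nu>)"
      by (rule integral_complex_of_real)
    also have "(\<integral>s. ((a s)^2 - a s) / x \<partial>\<nu>) = (B - A) / x"
      using kr(1,2) unfolding A_def B_def by simp
    finally show ?thesis .
  qed
  define p where "p = - A"
  define q where "q = (B - A) / x"
  have dpsi: "(psi \<nu> has_field_derivative complex_of_real q) (at (complex_of_real x))"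
    using psi_deriv[OF nu(1) x] unfolding QX q_def .
  have etaf: "eta \<nu> = (\<lambda>z. psi \<nu> z / (1 + psi \<nu> z))" by (rule ext) (simp add: eta_def)
  have nz: "1 + psi \<nu> (complex_of_real x) \<noteq> 0"
  proof -
    have "1 + psi \<nu> (complex_of_real x) = complex_of_real (1 - A)" unfolding psiX by simp
    then show ?thesis using A0 by simp
  qed
  have deta: "(eta \<nu> has_field_derivative
      ((complex_of_real q * (1 + complex_of_real p) - complex_of_real p * (0 + complex_of_real q))
        / ((1 + complex_of_real p) * (1 + complex_of_real p)))) (at (complex_of_real x))"
    unfolding etaf using DERIV_divide[OF dpsi DERIV_add[OF DERIV_const dpsi] nz] unfolding psiX p_def by simp
  define e where "e = - A / (1 - A)"
  have etaX: "eta \<nu> (complex_of_real x) = complex_of_real e"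
    unfolding eta_def psiX e_def by simp
  have cont: "isCont (eta \<nu>) (complex_of_real x)" using deta by (rule DERIV_isCont)
  have xnz: "complex_of_real x \<noteq> 0" using x by simp
  have dk0: "((\<lambda>z. eta \<nu> z / z) has_field_derivative
      (((complex_of_real q * (1 + complex_of_real p) - complex_of_real p * (0 + complex_of_real q))
        / ((1 + complex_of_real p) * (1 + complex_of_real p))) * complex_of_real x - complex_of_real e * 1)
       / (complex_of_real x * complex_of_real x)) (at (complex_of_real x))"
    using DERIV_divide[OF deta DERIV_ident xnz] unfolding etaX .
  define D where "D = (A - B) / (A * (1 - A))"
  have val: "(((complex_of_real q * (1 + complex_of_real p) - complex_of_real p * (0 + complex_of_real q))
        / ((1 + complex_of_real p) * (1 + complex_of_real p))) * complex_of_real x - complex_of_real e * 1)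
       / (complex_of_real x * complex_of_real x)
      = complex_of_real ((((q * (1 + p) - p * (0 + q)) / ((1 + p) * (1 + p))) * x - e * 1) / (x * x))"
    by simp
  have rval: "(((q * (1 + p) - p * (0 + q)) / ((1 + p) * (1 + p))) * x - e * 1) / (x * x)
      = (e / x) * (D - 1) / x"
    by (rule rval_lemma) (use A0 x in \<open>auto simp: q_def p_def e_def D_def\<close>)
  have dk: "((\<lambda>z. eta \<nu> z / z) has_field_derivative complex_of_real ((e / x) * (D - 1) / x)) (at (complex_of_real x))"
    using dk0 unfolding val rval .
  have "e < 0" unfolding e_def using A0 by (simp add: divide_neg_pos)
  moreover have "0 < D" unfolding D_def using A0 AB by (intro divide_pos_pos) auto
  moreover have "D \<le> 1" unfolding D_def using A0 AB by (simp add: divide_le_eq algebra_simps power2_eq_square)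
  ultimately show ?thesis using etaX cont dk by blast
qed


lemma notin_Rplus: "Im z \<noteq> 0 \<Longrightarrow> z \<in> Cminus_Rplus"
  unfolding Cminus_Rplus_def by auto

lemma neg_in: "t < 0 \<Longrightarrow> complex_of_real t \<in> Cminus_Rplus"
  unfolding Cminus_Rplus_def by auto

lemma prod_lt1:
  fixes D1 D2 :: real
  assumes "0 < D1" "D1 \<le> 1" "0 < D2" "D2 \<le> 1"
  shows "\<bar>(D1 - 1) * (D2 - 1)\<bar> < 1"
proof -
  have a: "\<bar>D1 - 1\<bar> < 1" "\<bar>D2 - 1\<bar> \<le> 1" using assms by auto
  have "\<bar>D1 - 1\<bar> * \<bar>D2 - 1\<bar> \<le> \<bar>D1 - 1\<bar>" using a by (intro mult_left_le) auto
  then show ?thesis using a by (simp add: abs_mult)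
qed

lemma final_real:
  fixes t e1 e2 f1 f2 D1 D2 :: real
  assumes "t \<noteq> 0" "e1 \<noteq> 0" "e2 \<noteq> 0" "f1 = e1 * e2 / t" "f2 = e1 * e2 / t"
  shows "t * t * ((f1 / e1) * (D1 - 1) / e1) * ((f2 / e2) * (D2 - 1) / e2) = (D1 - 1) * (D2 - 1)"
  using assms by (simp add: field_simps)

theorem corollary5p3:
  fixes \<mu>1 \<mu>2 :: "real measure" and \<omega>1 \<omega>2 :: "complex \<Rightarrow> complex" and t :: real
  assumes "prob_on_Rplus \<mu>1" and "prob_on_Rplus \<mu>2"
    and "\<not> is_point_mass \<mu>1" and "\<not> is_point_mass \<mu>2"
    and "subordination_pair \<mu>1 \<mu>2 \<omega>1 \<omega>2"
    and "t < 0"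
  shows "norm (deriv (\<lambda>z. complex_of_real t * (eta \<mu>1 (complex_of_real t * (eta \<mu>2 z / z))
                             / (complex_of_real t * (eta \<mu>2 z / z))))
                (\<omega>2 (complex_of_real t))) < 1
       \<and> norm ((complex_of_real t)\<^sup>2 * deriv (\<lambda>z. eta \<mu>1 z / z) (\<omega>1 (complex_of_real t))
                * deriv (\<lambda>z. eta \<mu>2 z / z) (\<omega>2 (complex_of_real t))) < 1"
proof -
  define T where "T = complex_of_real t"
  have sp: "\<omega>1 \<in> Eta_Rplus" "\<omega>2 \<in> Eta_Rplus"
    and heq: "\<And>z. Im z > 0 \<Longrightarrow> eta \<mu>1 (\<omega>1 z) = \<omega>1 z * \<omega>2 z / z \<and> eta \<mu>2 (\<omega>2 z) = \<omega>1 z * \<omega>2 z / z"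
    using assms(5) unfolding subordination_pair_def by auto
  obtain \<nu>1 where n1: "prob_on_Rplus \<nu>1" "\<nu>1 \<noteq> return borel 0" "\<forall>z\<in>Cminus_Rplus. \<omega>1 z = eta \<nu>1 z"
    using sp(1) unfolding Eta_Rplus_def by auto
  obtain \<nu>2 where n2: "prob_on_Rplus \<nu>2" "\<nu>2 \<noteq> return borel 0" "\<forall>z\<in>Cminus_Rplus. \<omega>2 z = eta \<nu>2 z"
    using sp(2) unfolding Eta_Rplus_def by auto
  have m1: "\<mu>1 \<noteq> return borel 0" and m2: "\<mu>2 \<noteq> return borel 0"
    using assms(3,4) unfolding is_point_mass_def by auto
  have TC: "T \<in> Cminus_Rplus" unfolding T_def using assms(6) by (rule neg_in)
  obtain e1 D1' where E1: "eta \<nu>1 T = complex_of_real e1" "e1 < 0" "isCont (eta \<nu>1) T"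
    using key[OF n1(1,2) assms(6)] unfolding T_def by blast
  obtain e2 D2' where E2: "eta \<nu>2 T = complex_of_real e2" "e2 < 0" "isCont (eta \<nu>2) T"
    using key[OF n2(1,2) assms(6)] unfolding T_def by blast
  have w1: "\<omega>1 T = complex_of_real e1" using n1(3) TC E1(1) by simp
  have w2: "\<omega>2 T = complex_of_real e2" using n2(3) TC E2(1) by simp
  obtain f1 D1 where F1: "eta \<mu>1 (complex_of_real e1) = complex_of_real f1" "f1 < 0"
      "isCont (eta \<mu>1) (complex_of_real e1)"
      "((\<lambda>z. eta \<mu>1 z / z) has_field_derivative complex_of_real ((f1 / e1) * (D1 - 1) / e1)) (at (complex_of_real e1))"
      "0 < D1" "D1 \<le> 1"
    using key[OF assms(1) m1 E1(2)] by blast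
  obtain f2 D2 where F2: "eta \<mu>2 (complex_of_real e2) = complex_of_real f2" "f2 < 0"
      "isCont (eta \<mu>2) (complex_of_real e2)"
      "((\<lambda>z. eta \<mu>2 z / z) has_field_derivative complex_of_real ((f2 / e2) * (D2 - 1) / e2)) (at (complex_of_real e2))"
      "0 < D2" "D2 \<le> 1"
    using key[OF assms(2) m2 E2(2)] by blast
  define zs where "zs n = T + \<i> * complex_of_real (1 / real (Suc n))" for n
  have zs_im: "Im (zs n) > 0" for n unfolding zs_def T_def by simp
  have zs_lim: "zs \<longlonglongrightarrow> T"
  proof -
    have "(\<lambda>n. 1 / real (Suc n)) \<longlonglongrightarrow> 0"
      using LIMSEQ_inverse_real_of_nat by (simp add: inverse_eq_divide)
    then have "(\<lambda>n. complex_of_real (1 / real (Suc n))) \<longlonglongrightarrow> complex_of_real 0"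
      by (rule tendsto_of_real)
    then have "(\<lambda>n. T + \<i> * complex_of_real (1 / real (Suc n))) \<longlonglongrightarrow> T + \<i> * complex_of_real 0"
      by (rule tendsto_add[OF tendsto_const tendsto_mult[OF tendsto_const]])
    then show ?thesis unfolding zs_def by simp
  qed
  have o1: "(\<lambda>n. \<omega>1 (zs n)) \<longlonglongrightarrow> complex_of_real e1"
  proof -
    have "(\<lambda>n. eta \<nu>1 (zs n)) \<longlonglongrightarrow> eta \<nu>1 T" by (rule isCont_tendsto_compose[OF E1(3) zs_lim])
    moreover have "\<omega>1 (zs n) = eta \<nu>1 (zs n)" for n using n1(3) notin_Rplus zs_im[of n] by simp
    ultimately show ?thesis using E1(1) by simp
  qed
  have o2: "(\<lambda>n. \<omega>2 (zs n)) \<longlonglongrightarrow> complex_of_real e2"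
  proof -
    have "(\<lambda>n. eta \<nu>2 (zs n)) \<longlonglongrightarrow> eta \<nu>2 T" by (rule isCont_tendsto_compose[OF E2(3) zs_lim])
    moreover have "\<omega>2 (zs n) = eta \<nu>2 (zs n)" for n using n2(3) notin_Rplus zs_im[of n] by simp
    ultimately show ?thesis using E2(1) by simp
  qed
  have Tnz: "T \<noteq> 0" unfolding T_def using assms(6) by simp
  have rhs: "(\<lambda>n. \<omega>1 (zs n) * \<omega>2 (zs n) / zs n) \<longlonglongrightarrow> complex_of_real e1 * complex_of_real e2 / T"
    by (intro tendsto_divide tendsto_mult o1 o2 zs_lim Tnz)
  have l1: "(\<lambda>n. eta \<mu>1 (\<omega>1 (zs n))) \<longlonglongrightarrow> complex_of_real f1"
    using isCont_tendsto_compose[OF F1(3) o1] F1(1) by simp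
  have l2: "(\<lambda>n. eta \<mu>2 (\<omega>2 (zs n))) \<longlonglongrightarrow> complex_of_real f2"
    using isCont_tendsto_compose[OF F2(3) o2] F2(1) by simp
  have "(\<lambda>n. eta \<mu>1 (\<omega>1 (zs n))) = (\<lambda>n. \<omega>1 (zs n) * \<omega>2 (zs n) / zs n)"
    using heq zs_im by auto
  with l1 rhs have eq1: "complex_of_real f1 = complex_of_real e1 * complex_of_real e2 / T"
    using LIMSEQ_unique by metis
  have "(\<lambda>n. eta \<mu>2 (\<omega>2 (zs n))) = (\<lambda>n. \<omega>1 (zs n) * \<omega>2 (zs n) / zs n)"
    using heq zs_im by auto
  with l2 rhs have eq2: "complex_of_real f2 = complex_of_real e1 * complex_of_real e2 / T"
    using LIMSEQ_unique by metis
  have f1e: "f1 = e1 * e2 / t" using eq1 unfolding T_def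
    by (metis of_real_divide of_real_eq_iff of_real_mult)
  have f2e: "f2 = e1 * e2 / t" using eq2 unfolding T_def
    by (metis of_real_divide of_real_eq_iff of_real_mult)
  define k1 where "k1 = (f1 / e1) * (D1 - 1) / e1"
  define k2 where "k2 = (f2 / e2) * (D2 - 1) / e2"
  have dk1: "((\<lambda>z. eta \<mu>1 z / z) has_field_derivative complex_of_real k1) (at (complex_of_real e1))"
    using F1(4) unfolding k1_def .
  have dk2: "((\<lambda>z. eta \<mu>2 z / z) has_field_derivative complex_of_real k2) (at (complex_of_real e2))"
    using F2(4) unfolding k2_def .
  have dh: "((\<lambda>z. T * (eta \<mu>2 z / z)) has_field_derivative T * complex_of_real k2) (at (complex_of_real e2))"
    by (rule DERIV_cmult[OF dk2])
  have hval: "T * (eta \<mu>2 (complex_of_real e2) / complex_of_real e2) = complex_of_real e1"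
  proof -
    have "t * (f2 / e2) = e1" using f2e E2(2) assms(6) by (simp add: field_simps)
    then show ?thesis unfolding F2(1) T_def by (metis of_real_divide of_real_mult)
  qed
  have dcomp: "((\<lambda>z. eta \<mu>1 (T * (eta \<mu>2 z / z)) / (T * (eta \<mu>2 z / z))) has_field_derivative
      complex_of_real k1 * (T * complex_of_real k2)) (at (complex_of_real e2))"
    using DERIV_chain2[of "\<lambda>z. eta \<mu>1 z / z", OF _ dh] dk1 unfolding hval by simp
  have dphi: "((\<lambda>z. T * (eta \<mu>1 (T * (eta \<mu>2 z / z)) / (T * (eta \<mu>2 z / z)))) has_field_derivative
      T * (complex_of_real k1 * (T * complex_of_real k2))) (at (complex_of_real e2))"
    by (rule DERIV_cmult[OF dcomp])
  have v1: "deriv (\<lambda>z. T * (eta \<mu>1 (T * (eta \<mu>2 z / z)) / (T * (eta \<mu>2 z / z)))) (\<omega>2 T)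
      = complex_of_real (t * (k1 * (t * k2)))"
  proof -
    have "deriv (\<lambda>z. T * (eta \<mu>1 (T * (eta \<mu>2 z / z)) / (T * (eta \<mu>2 z / z)))) (\<omega>2 T)
        = T * (complex_of_real k1 * (T * complex_of_real k2))"
      by (subst w2) (rule DERIV_imp_deriv[OF dphi])
    also have "\<dots> = complex_of_real (t * (k1 * (t * k2)))" unfolding T_def by simp
    finally show ?thesis .
  qed
  have v2: "T\<^sup>2 * deriv (\<lambda>z. eta \<mu>1 z / z) (\<omega>1 T) * deriv (\<lambda>z. eta \<mu>2 z / z) (\<omega>2 T)
      = complex_of_real (t * (k1 * (t * k2)))"
  proof -
    have a: "deriv (\<lambda>z. eta \<mu>1 z / z) (\<omega>1 T) = complex_of_real k1"
      by (subst w1) (rule DERIV_imp_deriv[OF dk1])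
    have b: "deriv (\<lambda>z. eta \<mu>2 z / z) (\<omega>2 T) = complex_of_real k2"
      by (subst w2) (rule DERIV_imp_deriv[OF dk2])
    show ?thesis unfolding a b unfolding T_def by (simp add: power2_eq_square)
  qed
  have r0: "t * t * k1 * k2 = (D1 - 1) * (D2 - 1)"
    unfolding k1_def k2_def mult.assoc[symmetric]
    by (rule final_real) (use f1e f2e E1(2) E2(2) assms(6) in auto)
  have "t * (k1 * (t * k2)) = t * t * k1 * k2" by (simp add: mult_ac)
  with r0 have r: "t * (k1 * (t * k2)) = (D1 - 1) * (D2 - 1)" by simp
  have n: "norm (complex_of_real (t * (k1 * (t * k2)))) < 1"
    unfolding norm_of_real r using prod_lt1[OF F1(5,6) F2(5,6)] .
  show ?thesis using v1 v2 n unfolding T_def by simp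
qed

end
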